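(* There exist a complex vector field $B=(B_1,B_2)$ on $\mathbb{T}^2\times\mathbb{R}^+$ with values in $\mathbb{C}^2$, continuous and uniformly bounded, and a non-zero, uniformly $C^2$, complex-valued function $u$ on $\mathbb{T}^2\times\mathbb{R}^+$ such that $$\dot u=\Delta u+B\cdot\nabla u=\partial_x^2u+\partial_y^2u+B_1\partial_xu+B_2\partial_yu\quad\text{in }\mathbb{T}^2\times\mathbb{R}^+,$$ and $u$ has double exponential decay: there is a numerical constant $c>0$ such that for all sufficiently large $T$, $$\sup_{\mathbb{T}^2\times\{t\ge T\}}|u(x,y,t)|\le e^{-ce^{cT}}.$$
   Context: $\mathbb{T}^2=(\mathbb{R}/2\pi\mathbb{Z})^2$ with coordinates $(x,y)$; $t\ge0$ is the third coordinate. $\dot u=\partial_tu$; $\Delta$ and $\nabla$ involve only the spatial variables $(x,y)$. Uniformly $C^2$ means all partial derivatives in $(x,y,t)$ of order at most $2$ are continuous and bounded. *)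

theory Defs
  imports "HOL-Analysis.Analysis"
begin

text \<open>Points of \<open>\<real>\<^sup>2 \<times> [0,\<infinity>)\<close> are triples \<open>(x,y,t)\<close>; functions on
  \<open>\<T>\<^sup>2 \<times> \<real>\<^sup>+\<close> are functions on triples that are \<open>2\<pi>\<close>-periodic in \<open>x\<close> and \<open>y\<close>,
  considered on the closed half-space \<open>t \<ge> 0\<close>.\<close>

definition halfspace :: "(real \<times> real \<times> real) set" where
  "halfspace = {p. snd (snd p) \<ge> 0}"

definition coord_dir :: "nat \<Rightarrow> real \<times> real \<times> real" where
  "coord_dir i = (if i = 0 then (1,0,0) else if i = 1 then (0,1,0) else (0,0,1))"

definition torus_periodic :: "(real \<times> real \<times> real \<Rightarrow> 'a) \<Rightarrow> bool" where
  "torus_periodic f \<longleftrightarrow>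
     (\<forall>x y t. f (x + 2*pi, y, t) = f (x, y, t) \<and> f (x, y + 2*pi, t) = f (x, y, t))"

text \<open>\<open>g\<close> is the partial derivative of \<open>f\<close> in coordinate \<open>i\<close> (0 = x, 1 = y, 2 = t)
  at every point of the half-space (one-sided in \<open>t\<close> at \<open>t = 0\<close>).\<close>
definition has_partial ::
  "(real \<times> real \<times> real \<Rightarrow> complex) \<Rightarrow> nat \<Rightarrow> (real \<times> real \<times> real \<Rightarrow> complex) \<Rightarrow> bool" where
  "has_partial f i g \<longleftrightarrow>
     (\<forall>p \<in> halfspace.
        ((\<lambda>s. f (p + s *\<^sub>R coord_dir i)) has_vector_derivative g p)
          (at 0 within {s. p + s *\<^sub>R coord_dir i \<in> halfspace}))"

definition bounded_continuous_on_H :: "(real \<times> real \<times> real \<Rightarrow> 'a::real_normed_vector) \<Rightarrow> bool" where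
  "bounded_continuous_on_H f \<longleftrightarrow> continuous_on halfspace f \<and> bounded (f ` halfspace)"

text \<open>Uniformly \<open>C\<^sup>2\<close> with first partials \<open>D1 i\<close> and second partials \<open>D2 i j = \<partial>\<^sub>j \<partial>\<^sub>i f\<close>:
  all partial derivatives of order at most 2 exist, are continuous and bounded.\<close>
definition uniformly_C2_with ::
  "(real \<times> real \<times> real \<Rightarrow> complex) \<Rightarrow> (nat \<Rightarrow> real \<times> real \<times> real \<Rightarrow> complex)
     \<Rightarrow> (nat \<Rightarrow> nat \<Rightarrow> real \<times> real \<times> real \<Rightarrow> complex) \<Rightarrow> bool" where
  "uniformly_C2_with f D1 D2 \<longleftrightarrow>
     bounded_continuous_on_H f \<and>
     (\<forall>i<3. has_partial f i (D1 i) \<and> bounded_continuous_on_H (D1 i)) \<and>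
     (\<forall>i<3. \<forall>j<3. has_partial (D1 i) j (D2 i j) \<and> bounded_continuous_on_H (D2 i j))"

end

theory Submission
  imports Defs
begin


definition phi0 :: "real \<Rightarrow> real" where
  "phi0 r = (if \<bar>r\<bar> \<le> 1 then (1 - r^2)^3 else 0)"
definition phi1 :: "real \<Rightarrow> real" where
  "phi1 r = (if \<bar>r\<bar> \<le> 1 then -6*r*(1 - r^2)^2 else 0)"
definition phi2 :: "real \<Rightarrow> real" where
  "phi2 r = (if \<bar>r\<bar> \<le> 1 then -6*(1 - r^2)^2 + 24*r^2*(1-r^2) else 0)"

lemma abs1_sq: "\<bar>r::real\<bar> = 1 \<Longrightarrow> r^2 = 1"
  by (metis abs_power2 power_one power2_abs)

lemma closure_out: "closure {r::real. \<not> \<bar>r\<bar> \<le> 1} \<subseteq> {r. 1 \<le> \<bar>r\<bar>}"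
proof (rule closure_minimal)
  show "{r::real. \<not> \<bar>r\<bar> \<le> 1} \<subseteq> {r. 1 \<le> \<bar>r\<bar>}" by auto
  show "closed {r::real. 1 \<le> \<bar>r\<bar>}"
    by (intro closed_Collect_le continuous_intros)
qed

lemma closed_in: "closed {r::real. \<bar>r\<bar> \<le> 1}"
  by (intro closed_Collect_le continuous_intros)

lemma piece_deriv:
  fixes P P' :: "real \<Rightarrow> real"
  assumes d: "\<And>r. (P has_real_derivative P' r) (at r)"
    and z: "\<And>r. \<bar>r\<bar> = 1 \<Longrightarrow> P r = 0"
    and z': "\<And>r. \<bar>r\<bar> = 1 \<Longrightarrow> P' r = 0"
  shows "((\<lambda>r. if \<bar>r\<bar> \<le> 1 then P r else 0) has_real_derivative
            (if \<bar>r\<bar> \<le> 1 then P' r else 0)) (at r)"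
proof -
  let ?S = "{r::real. \<bar>r\<bar> \<le> 1}" and ?T = "{r::real. \<not> \<bar>r\<bar> \<le> 1}"
  have cl: "x \<in> closure ?S \<Longrightarrow> x \<in> closure ?T \<Longrightarrow> \<bar>x\<bar> = 1" for x
    using closure_out closed_in closure_closed by fastforce
  have "((\<lambda>x. if x \<in> ?S then P x else 0) has_vector_derivative
            (if r \<in> ?S then P' r else 0)) (at r within UNIV)"
  proof (rule has_vector_derivative_If_within_closures[where T = ?T])
    show "r \<in> ?S \<union> ?T" by auto
    show "UNIV = ?S \<union> ?T" by auto
    show "(P has_vector_derivative P' r) (at r within ?S \<union> (closure ?S \<inter> closure ?T))"
      using d[of r] has_field_derivative_at_within
      unfolding has_real_derivative_iff_has_vector_derivative[symmetric] by blast
    show "((\<lambda>x. 0) has_vector_derivative 0) (at r within ?T \<union> (closure ?S \<inter> closure ?T))"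
      by simp
    show "r \<in> closure ?S \<Longrightarrow> r \<in> closure ?T \<Longrightarrow> P r = 0"
      using cl z by blast
    show "r \<in> closure ?S \<Longrightarrow> r \<in> closure ?T \<Longrightarrow> P' r = 0"
      using cl z' by blast
  qed
  then show ?thesis
    by (simp add: has_real_derivative_iff_has_vector_derivative)
qed

lemma phi0_deriv: "(phi0 has_real_derivative phi1 r) (at r)"
proof -
  have "((\<lambda>r. if \<bar>r\<bar> \<le> 1 then (1 - r^2)^3 else 0) has_real_derivative
            (if \<bar>r\<bar> \<le> 1 then -6*r*(1 - r^2)^2 else 0)) (at r)"
    by (rule piece_deriv) (auto intro!: derivative_eq_intros simp: abs1_sq)
  then show ?thesis unfolding phi0_def[abs_def] phi1_def by simp
qed

lemma phi1_deriv: "(phi1 has_real_derivative phi2 r) (at r)"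
proof -
  have "((\<lambda>r. if \<bar>r\<bar> \<le> 1 then -6*r*(1 - r^2)^2 else 0) has_real_derivative
            (if \<bar>r\<bar> \<le> 1 then -6*(1 - r^2)^2 + 24*r^2*(1-r^2) else 0)) (at r)"
    apply (rule piece_deriv)
    apply (auto intro!: derivative_eq_intros simp: algebra_simps power2_eq_square)[1]
    apply (simp add: abs1_sq)+
    done
  then show ?thesis unfolding phi1_def[abs_def] phi2_def by simp
qed

lemma phi2_cont: "continuous_on UNIV phi2"
proof -
  have "continuous_on ({r. \<bar>r\<bar> \<le> 1} \<union> {r. 1 \<le> \<bar>r\<bar>})
     (\<lambda>r. if \<bar>r\<bar> \<le> 1 then -6*(1 - r^2)^2 + 24*r^2*(1-r^2) else (0::real))"
    apply (rule continuous_on_cases)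
    using closed_in by (auto intro!: continuous_intros closed_Collect_le simp: abs1_sq)
  moreover have "{r::real. \<bar>r\<bar> \<le> 1} \<union> {r. 1 \<le> \<bar>r\<bar>} = UNIV" by auto
  ultimately show ?thesis unfolding phi2_def[abs_def] by simp
qed

lemma phi0_cont: "continuous_on UNIV phi0"
  using phi0_deriv by (meson DERIV_isCont continuous_at_imp_continuous_on)
lemma phi1_cont: "continuous_on UNIV phi1"
  using phi1_deriv by (meson DERIV_isCont continuous_at_imp_continuous_on)

lemma phi_vanish: "1 \<le> \<bar>r\<bar> \<Longrightarrow> phi0 r = 0 \<and> phi1 r = 0 \<and> phi2 r = 0"
  by (cases "\<bar>r\<bar> = 1") (auto simp: phi0_def phi1_def phi2_def abs1_sq)

lemma sq_le1: "\<bar>r::real\<bar> \<le> 1 \<Longrightarrow> 0 \<le> 1 - r^2 \<and> 1 - r^2 \<le> 1"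
proof -
  assume a: "\<bar>r\<bar> \<le> 1"
  have "\<bar>r\<bar>^2 \<le> 1" by (rule power_le_one) (use a in auto)
  then have "r^2 \<le> 1" by simp
  moreover have "0 \<le> r^2" by simp
  ultimately show ?thesis by linarith
qed

lemma phi0_bound: "\<bar>phi0 r\<bar> \<le> 1"
  using sq_le1[of r] by (auto simp: phi0_def power_le_one abs_le_iff)

lemma phi1_bound: "\<bar>phi1 r\<bar> \<le> 6"
proof (cases "\<bar>r\<bar> \<le> 1")
  case True
  have a: "0 \<le> 1 - r^2" "1 - r^2 \<le> 1" using sq_le1[OF True] by auto
  have "(1 - r^2)^2 \<le> 1" using a by (simp add: power_le_one)
  then have "\<bar>r\<bar> * (1-r^2)^2 \<le> 1 * 1" using True by (intro mult_mono) auto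
  then show ?thesis using True by (simp add: phi1_def abs_mult)
qed (simp add: phi1_def)

lemma phi2_bound: "\<bar>phi2 r\<bar> \<le> 30"
proof (cases "\<bar>r\<bar> \<le> 1")
  case True
  have a: "0 \<le> 1 - r^2" "1 - r^2 \<le> 1" using sq_le1[OF True] by auto
  have r2: "r^2 \<le> 1" using a by simp
  have "(1 - r^2)^2 \<le> 1" using a by (simp add: power_le_one)
  moreover have "r^2 * (1-r^2) \<le> 1" using a r2 by (simp add: mult_le_one)
  moreover have "0 \<le> r^2 * (1-r^2)" using a by simp
  moreover have "0 \<le> (1 - r^2)^2" by simp
  ultimately have "\<bar>-6*((1 - r^2)^2) + 24*(r^2*(1-r^2))\<bar> \<le> 30"
    unfolding abs_le_iff by linarith
  then have "\<bar>-6*(1 - r^2)^2 + 24*r^2*(1-r^2)\<bar> \<le> 30" by (simp add: mult.assoc)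
  then show ?thesis using True by (simp add: phi2_def)
qed (simp add: phi2_def)



definition Aa :: "real \<Rightarrow> real" where
  "Aa t = exp ((1 - (exp t)^2) / 2)"

definition Vf :: "(real \<Rightarrow> real) \<Rightarrow> (int \<Rightarrow> real \<Rightarrow> real \<Rightarrow> complex) \<Rightarrow> real \<Rightarrow> real \<Rightarrow> real \<Rightarrow> complex" where
  "Vf \<psi> S s x y = \<psi> (s - of_int \<lfloor>s\<rfloor>) *\<^sub>R S \<lfloor>s\<rfloor> x y + \<psi> (s - of_int \<lfloor>s\<rfloor> - 1) *\<^sub>R S (\<lfloor>s\<rfloor> + 1) x y"

definition Wf :: "(real \<Rightarrow> real) \<Rightarrow> (real \<Rightarrow> real) \<Rightarrow> (int \<Rightarrow> real \<Rightarrow> real \<Rightarrow> complex) \<Rightarrow> real \<times> real \<times> real \<Rightarrow> complex" where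
  "Wf c \<psi> S = (\<lambda>(x,y,t). (Aa t * c (exp t)) *\<^sub>R Vf \<psi> S (exp t) x y)"

lemma Wf_app: "Wf c \<psi> S (x,y,t) = (Aa t * c (exp t)) *\<^sub>R Vf \<psi> S (exp t) x y"
  by (simp add: Wf_def)

lemma Aa_deriv: "(Aa has_real_derivative (- (exp t ^ 2 * Aa t))) (at t)"
  unfolding Aa_def[abs_def]
  by (auto intro!: derivative_eq_intros simp: power2_eq_square)

lemma Aa_pos: "0 < Aa t" by (simp add: Aa_def)

lemma local_rep:
  assumes h: "\<And>r. 1 \<le> \<bar>r\<bar> \<Longrightarrow> h r = 0"
    and s1: "of_int n - 1 < s" and s2: "s < of_int n + 1"
  shows "Vf h S s x y = h (s - of_int (n-1)) *\<^sub>R S (n-1) x y + h (s - of_int n) *\<^sub>R S n x y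
            + h (s - of_int (n+1)) *\<^sub>R S (n+1) x y"
proof -
  have fl: "\<lfloor>s\<rfloor> = n - 1 \<or> \<lfloor>s\<rfloor> = n"
    using s1 s2 by linarith
  then show ?thesis
  proof
    assume f: "\<lfloor>s\<rfloor> = n - 1"
    then have "s < of_int n" by linarith
    then have "h (s - of_int (n+1)) = 0" by (intro h) simp
    moreover have "s - of_int (n-1) - 1 = s - of_int n" by simp
    ultimately show ?thesis by (simp add: Vf_def f)
  next
    assume f: "\<lfloor>s\<rfloor> = n"
    then have "of_int n \<le> s" by linarith
    then have "h (s - of_int (n-1)) = 0" by (intro h) simp
    moreover have "h (s - of_int n - 1) = h (s - of_int (n+1))" by (simp add: algebra_simps)
    ultimately show ?thesis by (simp add: Vf_def f)
  qed
qed

lemma nbhd_open: "open {t::real. of_int n - 1 < exp t \<and> exp t < of_int n + 1}"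
  by (intro open_Collect_conj open_Collect_less continuous_intros)

lemma nbhd_mem: "t \<in> {t::real. of_int \<lfloor>exp t\<rfloor> - 1 < exp t \<and> exp t < of_int \<lfloor>exp t\<rfloor> + 1}"
  by auto linarith+

lemma V_deriv:
  assumes d: "\<And>r. (\<psi> has_real_derivative \<psi>' r) (at r)"
    and v: "\<And>r. 1 \<le> \<bar>r\<bar> \<Longrightarrow> \<psi> r = 0" and v': "\<And>r. 1 \<le> \<bar>r\<bar> \<Longrightarrow> \<psi>' r = 0"
  shows "((\<lambda>\<tau>. Vf \<psi> S (exp \<tau>) x y) has_vector_derivative (exp t *\<^sub>R Vf \<psi>' S (exp t) x y)) (at t)"
proof -
  define n where "n = \<lfloor>exp t\<rfloor>"
  define U where "U = {t::real. of_int n - 1 < exp t \<and> exp t < of_int n + 1}"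
  have U: "open U" "t \<in> U" using nbhd_open nbhd_mem unfolding U_def n_def by auto
  let ?g = "\<lambda>\<tau>. \<psi> (exp \<tau> - of_int (n-1)) *\<^sub>R S (n-1) x y + \<psi> (exp \<tau> - of_int n) *\<^sub>R S n x y
            + \<psi> (exp \<tau> - of_int (n+1)) *\<^sub>R S (n+1) x y"
  have dc: "((\<lambda>\<tau>. \<psi> (exp \<tau> - c)) has_real_derivative (\<psi>' (exp t - c) * exp t)) (at t)" for c
    by (rule DERIV_chain2[OF d]) (auto intro!: derivative_eq_intros)
  have tm: "((\<lambda>\<tau>. \<psi> (exp \<tau> - c) *\<^sub>R S k x y) has_vector_derivative (\<psi>' (exp t - c) * exp t) *\<^sub>R S k x y) (at t)" for c k
    using has_vector_derivative_scaleR[OF dc[of c] has_vector_derivative_const[of "S k x y"]] by simp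
  have "(?g has_vector_derivative
      ((\<psi>' (exp t - of_int (n-1)) * exp t) *\<^sub>R S (n-1) x y + (\<psi>' (exp t - of_int n) * exp t) *\<^sub>R S n x y
            + (\<psi>' (exp t - of_int (n+1)) * exp t) *\<^sub>R S (n+1) x y)) (at t)"
    by (intro has_vector_derivative_add tm)
  moreover have "((\<psi>' (exp t - of_int (n-1)) * exp t) *\<^sub>R S (n-1) x y + (\<psi>' (exp t - of_int n) * exp t) *\<^sub>R S n x y
            + (\<psi>' (exp t - of_int (n+1)) * exp t) *\<^sub>R S (n+1) x y) = exp t *\<^sub>R Vf \<psi>' S (exp t) x y"
  proof -
    have "Vf \<psi>' S (exp t) x y = \<psi>' (exp t - of_int (n-1)) *\<^sub>R S (n-1) x y + \<psi>' (exp t - of_int n) *\<^sub>R S n x y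
            + \<psi>' (exp t - of_int (n+1)) *\<^sub>R S (n+1) x y"
      by (rule local_rep) (use v' U(2) in \<open>auto simp: U_def\<close>)
    then show ?thesis by (simp add: scaleR_add_right mult.commute)
  qed
  ultimately have "(?g has_vector_derivative exp t *\<^sub>R Vf \<psi>' S (exp t) x y) (at t)" by simp
  then show ?thesis
    by (rule has_vector_derivative_transform_within_open[OF _ U])
       (rule local_rep[symmetric], use v in \<open>auto simp: U_def\<close>)
qed



lemma W_deriv_t:
  assumes c: "\<And>s. (c has_real_derivative c' s) (at s)"
    and d: "\<And>r. (\<psi> has_real_derivative \<psi>' r) (at r)"
    and v: "\<And>r. 1 \<le> \<bar>r\<bar> \<Longrightarrow> \<psi> r = 0" and v': "\<And>r. 1 \<le> \<bar>r\<bar> \<Longrightarrow> \<psi>' r = 0"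
  shows "((\<lambda>\<tau>. Wf c \<psi> S (x,y,\<tau>)) has_vector_derivative
          (Wf (\<lambda>s. - (s^2 * c s) + s * c' s) \<psi> S (x,y,t) + Wf (\<lambda>s. s * c s) \<psi>' S (x,y,t))) (at t)"
proof -
  have L: "((\<lambda>\<tau>. Aa \<tau> * c (exp \<tau>)) has_real_derivative
       (- (exp t ^ 2 * Aa t) * c (exp t) + Aa t * (c' (exp t) * exp t))) (at t)"
  proof -
    have cd: "((\<lambda>\<tau>. c (exp \<tau>)) has_real_derivative c' (exp t) * exp t) (at t)"
      by (rule DERIV_chain2[OF c DERIV_exp])
    show ?thesis using DERIV_mult[OF Aa_deriv cd] by (simp add: algebra_simps)
  qed
  have "((\<lambda>\<tau>. (Aa \<tau> * c (exp \<tau>)) *\<^sub>R Vf \<psi> S (exp \<tau>) x y) has_vector_derivative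
     ((Aa t * c (exp t)) *\<^sub>R (exp t *\<^sub>R Vf \<psi>' S (exp t) x y) +
      (- (exp t ^ 2 * Aa t) * c (exp t) + Aa t * (c' (exp t) * exp t)) *\<^sub>R Vf \<psi> S (exp t) x y)) (at t)"
    by (rule has_vector_derivative_scaleR[OF L V_deriv[OF d v v']])
  then show ?thesis
    by (simp add: Wf_app algebra_simps)
qed

lemma W_deriv_x:
  assumes "\<And>k. ((\<lambda>x. S k x y) has_vector_derivative Sx k x y) (at x)"
  shows "((\<lambda>x. Wf c \<psi> S (x,y,t)) has_vector_derivative Wf c \<psi> Sx (x,y,t)) (at x)"
  unfolding Wf_app Vf_def
  by (intro bounded_linear.has_vector_derivative[OF bounded_linear_scaleR_right]
      has_vector_derivative_add assms)

lemma W_deriv_y: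
  assumes "\<And>k. ((\<lambda>y. S k x y) has_vector_derivative Sy k x y) (at y)"
  shows "((\<lambda>y. Wf c \<psi> S (x,y,t)) has_vector_derivative Wf c \<psi> Sy (x,y,t)) (at y)"
  unfolding Wf_app Vf_def
  by (intro bounded_linear.has_vector_derivative[OF bounded_linear_scaleR_right]
      has_vector_derivative_add assms)

lemma W_cont:
  assumes pc: "continuous_on UNIV \<psi>" and v: "\<And>r. 1 \<le> \<bar>r\<bar> \<Longrightarrow> \<psi> r = 0"
    and cc: "continuous_on UNIV c"
    and Sc: "\<And>k. continuous_on UNIV (\<lambda>p::real\<times>real\<times>real. S k (fst p) (fst (snd p)))"
  shows "continuous_on UNIV (Wf c \<psi> S)"
proof (rule continuous_at_imp_continuous_on, intro ballI)
  fix p :: "real \<times> real \<times> real"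
  obtain x0 y0 t0 where p: "p = (x0,y0,t0)" by (cases p) auto
  define n where "n = \<lfloor>exp t0\<rfloor>"
  define U where "U = {q::real\<times>real\<times>real. of_int n - 1 < exp (snd (snd q)) \<and> exp (snd (snd q)) < of_int n + 1}"
  have U: "open U" "p \<in> U"
    unfolding U_def p n_def
    by (intro open_Collect_conj open_Collect_less continuous_intros, auto) linarith+
  define g where "g = (\<lambda>q::real\<times>real\<times>real. (Aa (snd (snd q)) * c (exp (snd (snd q)))) *\<^sub>R
      (\<psi> (exp (snd (snd q)) - of_int (n-1)) *\<^sub>R S (n-1) (fst q) (fst (snd q))
     + \<psi> (exp (snd (snd q)) - of_int n) *\<^sub>R S n (fst q) (fst (snd q))
     + \<psi> (exp (snd (snd q)) - of_int (n+1)) *\<^sub>R S (n+1) (fst q) (fst (snd q))))"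
  have eq: "Wf c \<psi> S q = g q" if "q \<in> U" for q
  proof -
    obtain x y t where q: "q = (x,y,t)" by (cases q) auto
    have "Vf \<psi> S (exp t) x y = \<psi> (exp t - of_int (n-1)) *\<^sub>R S (n-1) x y + \<psi> (exp t - of_int n) *\<^sub>R S n x y
            + \<psi> (exp t - of_int (n+1)) *\<^sub>R S (n+1) x y"
      by (rule local_rep) (use v that in \<open>auto simp: U_def q\<close>)
    then show ?thesis by (simp add: q g_def Wf_app)
  qed
  have Aac: "continuous_on UNIV Aa"
    unfolding Aa_def[abs_def] by (intro continuous_intros) auto
  have "continuous_on UNIV g"
    unfolding g_def
    by (intro continuous_intros continuous_on_compose2[OF pc] continuous_on_compose2[OF cc]
         continuous_on_compose2[OF Aac]) (simp_all add: Sc)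
  then have "isCont g p" by (simp add: continuous_on_eq_continuous_at del: split_paired_All)
  moreover have "eventually (\<lambda>q. Wf c \<psi> S q = g q) (nhds p)"
    using U eq eventually_nhds by blast
  ultimately show "isCont (Wf c \<psi> S) p" using isCont_cong by blast
qed

lemma Aa_poly_bound: "Aa t * (2 + exp t)^6 \<le> 3456"
proof -
  define s where "s = exp t"
  have s0: "0 < s" by (simp add: s_def)
  define z where "z = s^2/2"
  have z0: "0 \<le> z" by (simp add: z_def)
  have "0 \<le> (s - 2) * (s - 2)" by simp
  moreover have "(2 + s)*(2 + s) + (s - 2) * (s - 2) = 8 + 2 * (s * s)" by (simp add: algebra_simps)
  ultimately have a: "(2 + s)^(2::nat) \<le> 8 + 4*z" unfolding z_def power2_eq_square by linarith
  have "(2 + s)^6 = ((2 + s)^2)^3" by (simp add: power_mult[symmetric])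
  also have "\<dots> \<le> (8 + 4*z)^3" by (intro power_mono a) simp
  also have "\<dots> = 64 * (2 + z)^3" by (simp add: power3_eq_cube algebra_simps)
  also have "(2 + z) \<le> 3 * exp (z/3)"
    using exp_ge_add_one_self[of "z/3"] by linarith
  then have "(2 + z)^3 \<le> (3 * exp (z/3))^3" by (intro power_mono) (use z0 in auto)
  then have "64 * (2 + z)^3 \<le> 64 * (27 * exp z)"
    by (simp add: power_mult_distrib exp_of_nat_mult[symmetric])
  finally have b: "(2 + s)^6 \<le> 1728 * exp z" by simp
  have e: "Aa t = exp (1/2) * exp (-z)"
    by (simp add: Aa_def z_def s_def exp_add[symmetric] diff_divide_distrib)
  have "Aa t * (2 + s)^6 \<le> Aa t * (1728 * exp z)"
    by (rule mult_left_mono[OF b]) (simp add: Aa_pos less_imp_le)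
  also have "\<dots> = exp (1/2) * exp (-z) * (1728 * exp z)" by (simp add: e)
  also have "\<dots> = 1728 * exp (1/2)" by (simp add: exp_minus field_simps)
  also have "\<dots> \<le> 1728 * 2"
  proof -
    have ee: "exp (1/2) * exp (1/2) \<le> (3::real)"
      using exp_le by (simp add: exp_add[symmetric])
    have "exp (1/2) \<le> (2::real)"
    proof (rule ccontr)
      assume "\<not> exp (1/2) \<le> (2::real)"
      then have "2 * 2 < exp (1/2) * exp (1/2::real)"
        by (intro mult_strict_mono) auto
      then show False using ee by simp
    qed
    then show ?thesis by simp
  qed
  finally show ?thesis by (simp add: s_def)
qed



lemma W_bound:
  assumes c: "\<And>s. 0 < s \<Longrightarrow> \<bar>c s\<bar> \<le> Kc * (1 + s)^4"
    and p: "\<And>r. \<bar>\<psi> r\<bar> \<le> Kp"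
    and S: "\<And>k x y. 0 \<le> k \<Longrightarrow> norm (S k x y) \<le> KS * (1 + of_int k)^2"
    and KS: "0 \<le> KS" and Kc: "0 \<le> Kc" and Kp: "0 \<le> Kp"
  shows "norm (Wf c \<psi> S q) \<le> 2 * Kc * Kp * KS * 3456"
proof -
  obtain x y t where q: "q = (x,y,t)" by (cases q) auto
  define s where "s = exp t"
  define m where "m = \<lfloor>s\<rfloor>"
  have s0: "0 < s" by (simp add: s_def)
  have m0: "0 \<le> m" "of_int m \<le> s" using s0 unfolding m_def by auto
  have p1: "(1 + of_int m)^2 \<le> (2 + s)^2" using m0 by (intro power_mono) auto
  have p2: "(1 + of_int (m+1))^2 \<le> (2 + s)^2" using m0 by (intro power_mono) auto
  have b1: "norm (S m x y) \<le> KS * (2 + s)^2"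
    using S[OF m0(1), of x y] mult_left_mono[OF p1 KS] by linarith
  have b2: "norm (S (m+1) x y) \<le> KS * (2 + s)^2"
    using S[of "m+1" x y] m0 mult_left_mono[OF p2 KS] by simp
  have "norm (Vf \<psi> S s x y) \<le> \<bar>\<psi> (s - of_int m)\<bar> * norm (S m x y) + \<bar>\<psi> (s - of_int m - 1)\<bar> * norm (S (m+1) x y)"
    unfolding Vf_def m_def by (rule order_trans[OF norm_triangle_ineq]) simp
  also have "\<dots> \<le> Kp * (KS * (2 + s)^2) + Kp * (KS * (2 + s)^2)"
    by (intro add_mono mult_mono p b1 b2) (use Kp in auto)
  finally have V: "norm (Vf \<psi> S s x y) \<le> 2 * Kp * KS * (2 + s)^2" by (simp add: ac_simps)
  have c2: "\<bar>c s\<bar> \<le> Kc * (2 + s)^4"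
  proof -
    have "(1 + s)^4 \<le> (2 + s)^4" using s0 by (intro power_mono) auto
    then show ?thesis using c[OF s0] mult_left_mono[OF _ Kc] by (meson order_trans)
  qed
  have "norm (Wf c \<psi> S q) = Aa t * (\<bar>c s\<bar> * norm (Vf \<psi> S s x y))"
    by (simp add: q Wf_app s_def abs_mult Aa_pos less_imp_le)
  also have "\<dots> \<le> Aa t * ((Kc * (2 + s)^4) * (2 * Kp * KS * (2 + s)^2))"
    by (intro mult_mono c2 V mult_left_mono) (use Aa_pos[of t] Kc Kp KS in auto)
  also have "\<dots> = 2 * Kc * Kp * KS * (Aa t * (2 + s)^6)"
    by (simp add: power_add[symmetric] algebra_simps)
  also have "\<dots> \<le> 2 * Kc * Kp * KS * 3456"
    using Aa_poly_bound[of t] Kp KS Kc by (intro mult_left_mono) (auto simp: s_def)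
  finally show ?thesis .
qed

lemma W_per:
  assumes "\<And>k x y. S k (x + 2*pi) y = S k x y" "\<And>k x y. S k x (y + 2*pi) = S k x y"
  shows "torus_periodic (Wf c \<psi> S)"
  unfolding torus_periodic_def by (simp add: Wf_app Vf_def assms)

definition E :: "int \<Rightarrow> real \<Rightarrow> real \<Rightarrow> complex" where
  "E k x y = (if even k then cis (of_int k * x) else cis (of_int k * y))"
definition Gx :: "int \<Rightarrow> real \<Rightarrow> real \<Rightarrow> complex" where
  "Gx k x y = (if even k then (\<i> * of_int k) * E k x y else 0)"
definition Gy :: "int \<Rightarrow> real \<Rightarrow> real \<Rightarrow> complex" where
  "Gy k x y = (if even k then 0 else (\<i> * of_int k) * E k x y)"
definition Gxx :: "int \<Rightarrow> real \<Rightarrow> real \<Rightarrow> complex" where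
  "Gxx k x y = (if even k then - (of_int k ^ 2 * E k x y) else 0)"
definition Gyy :: "int \<Rightarrow> real \<Rightarrow> real \<Rightarrow> complex" where
  "Gyy k x y = (if even k then 0 else - (of_int k ^ 2 * E k x y))"
definition Zf :: "int \<Rightarrow> real \<Rightarrow> real \<Rightarrow> complex" where
  "Zf k x y = 0"

lemma cis_deriv: "((\<lambda>x. cis (a * x)) has_vector_derivative (\<i> * of_real a) * cis (a * x)) (at x)"
proof -
  have "((\<lambda>x. cis (a * x)) has_derivative (\<lambda>h. (a * h) *\<^sub>R (\<i> * cis (a * x)))) (at x)"
    by (intro has_derivative_cis derivative_intros)
  moreover have "(\<lambda>h. (a * h) *\<^sub>R (\<i> * cis (a * x))) = (\<lambda>h. h *\<^sub>R ((\<i> * of_real a) * cis (a * x)))"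
    by (simp add: fun_eq_iff scaleR_conv_of_real algebra_simps)
  ultimately show ?thesis by (simp add: has_vector_derivative_def)
qed

lemma cis_per: "cis (of_int k * (x + 2*pi)) = cis (of_int k * x)"
proof -
  have "cis (of_int k * (x + 2*pi)) = cis (of_int k * x) * cis (2 * pi * of_int k)"
    by (simp add: cis_mult algebra_simps)
  also have "cis (2 * pi * of_int k) = 1" by simp
  finally show ?thesis by simp
qed

lemma E_per: "E k (x + 2*pi) y = E k x y" "E k x (y + 2*pi) = E k x y"
  by (simp_all add: E_def cis_per)

lemmas Es_defs = Gx_def Gy_def Gxx_def Gyy_def Zf_def

lemma Es_per:
  "Gx k (x + 2*pi) y = Gx k x y" "Gx k x (y + 2*pi) = Gx k x y"
  "Gy k (x + 2*pi) y = Gy k x y" "Gy k x (y + 2*pi) = Gy k x y"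
  "Gxx k (x + 2*pi) y = Gxx k x y" "Gxx k x (y + 2*pi) = Gxx k x y"
  "Gyy k (x + 2*pi) y = Gyy k x y" "Gyy k x (y + 2*pi) = Gyy k x y"
  "Zf k (x + 2*pi) y = Zf k x y" "Zf k x (y + 2*pi) = Zf k x y"
  by (simp_all add: Es_defs E_per)

lemma E_dx: "((\<lambda>x. E k x y) has_vector_derivative Gx k x y) (at x)"
  using cis_deriv[of "of_int k" x] by (cases "even k") (simp_all add: E_def Gx_def)
lemma E_dy: "((\<lambda>y. E k x y) has_vector_derivative Gy k x y) (at y)"
  using cis_deriv[of "of_int k" y] by (cases "even k") (simp_all add: E_def Gy_def)
lemma ii_sq: "(\<i> * a) * ((\<i> * a) * c) = - (a * a * c)"
proof -
  have "(\<i> * a) * ((\<i> * a) * c) = (\<i> * \<i>) * (a * a * c)" by (simp only: ac_simps)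
  then show ?thesis by simp
qed

lemma Ex_dx: "((\<lambda>x. Gx k x y) has_vector_derivative Gxx k x y) (at x)"
proof (cases "even k")
  case True
  have "((\<lambda>x. (\<i> * of_int k) * cis (of_int k * x)) has_vector_derivative
         (\<i> * of_int k) * ((\<i> * of_real (of_int k)) * cis (of_int k * x))) (at x)"
    by (intro has_vector_derivative_mult_right cis_deriv)
  then show ?thesis using True by (simp add: Gx_def Gxx_def E_def power2_eq_square ii_sq)
qed (simp add: Gx_def Gxx_def)
lemma Ex_dy: "((\<lambda>y. Gx k x y) has_vector_derivative Zf k x y) (at y)"
  by (cases "even k") (simp_all add: Gx_def Zf_def E_def)
lemma Ey_dx: "((\<lambda>x. Gy k x y) has_vector_derivative Zf k x y) (at x)"
  by (cases "even k") (simp_all add: Gy_def Zf_def E_def)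
lemma Ey_dy: "((\<lambda>y. Gy k x y) has_vector_derivative Gyy k x y) (at y)"
proof (cases "even k")
  case False
  have "((\<lambda>y. (\<i> * of_int k) * cis (of_int k * y)) has_vector_derivative
         (\<i> * of_int k) * ((\<i> * of_real (of_int k)) * cis (of_int k * y))) (at y)"
    by (intro has_vector_derivative_mult_right cis_deriv)
  then show ?thesis using False by (simp add: Gy_def Gyy_def E_def power2_eq_square ii_sq)
qed (simp add: Gy_def Gyy_def)

lemma E_cont: "continuous_on UNIV (\<lambda>p::real\<times>real\<times>real. E k (fst p) (fst (snd p)))"
  by (cases "even k") (auto simp: E_def intro!: continuous_intros)

lemma Es_cont:
  "continuous_on UNIV (\<lambda>p::real\<times>real\<times>real. Gx k (fst p) (fst (snd p)))"
  "continuous_on UNIV (\<lambda>p::real\<times>real\<times>real. Gy k (fst p) (fst (snd p)))"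
  "continuous_on UNIV (\<lambda>p::real\<times>real\<times>real. Gxx k (fst p) (fst (snd p)))"
  "continuous_on UNIV (\<lambda>p::real\<times>real\<times>real. Gyy k (fst p) (fst (snd p)))"
  "continuous_on UNIV (\<lambda>p::real\<times>real\<times>real. Zf k (fst p) (fst (snd p)))"
  by (cases "even k"; simp add: Es_defs; intro continuous_intros E_cont)+

lemma E_norm: "norm (E k x y) = 1" by (simp add: E_def)

lemma k_le: "0 \<le> k \<Longrightarrow> real_of_int k \<le> (1 + real_of_int k)^2"
  by (simp add: power2_eq_square algebra_simps)

lemma Es_norm:
  assumes "0 \<le> k"
  shows "norm (E k x y) \<le> 1 * (1 + of_int k)^2"
    "norm (Gx k x y) \<le> 1 * (1 + of_int k)^2"
    "norm (Gy k x y) \<le> 1 * (1 + of_int k)^2"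
    "norm (Gxx k x y) \<le> 1 * (1 + of_int k)^2"
    "norm (Gyy k x y) \<le> 1 * (1 + of_int k)^2"
    "norm (Zf k x y) \<le> 1 * (1 + of_int k)^2"
proof -
  have k0: "0 \<le> real_of_int k" using assms by simp
  have a: "1 \<le> (1 + real_of_int k)^2" using k0 by (simp add: power2_eq_square algebra_simps)
  have b: "real_of_int k ^ 2 \<le> (1 + real_of_int k)^2" using k0 by (intro power_mono) auto
  show "norm (E k x y) \<le> 1 * (1 + of_int k)^2" using a by (simp add: E_norm)
  show "norm (Gx k x y) \<le> 1 * (1 + of_int k)^2" using k_le[OF assms] k0
    by (simp add: Gx_def norm_mult E_norm)
  show "norm (Gy k x y) \<le> 1 * (1 + of_int k)^2" using k_le[OF assms] k0
    by (simp add: Gy_def norm_mult E_norm)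
  show "norm (Gxx k x y) \<le> 1 * (1 + of_int k)^2" using b
    by (simp add: Gxx_def norm_mult E_norm norm_power)
  show "norm (Gyy k x y) \<le> 1 * (1 + of_int k)^2" using b
    by (simp add: Gyy_def norm_mult E_norm norm_power)
  show "norm (Zf k x y) \<le> 1 * (1 + of_int k)^2" by (simp add: Zf_def)
qed



lemma hp0:
  assumes "\<And>x y t. ((\<lambda>x. f (x,y,t)) has_vector_derivative g (x,y,t)) (at x)"
  shows "has_partial f 0 g"
  unfolding has_partial_def
proof (intro ballI)
  fix p :: "real\<times>real\<times>real" assume "p \<in> halfspace"
  obtain x y t where p: "p = (x,y,t)" by (cases p) auto
  have e: "(\<lambda>s. f (p + s *\<^sub>R coord_dir 0)) = (\<lambda>x'. f (x',y,t)) \<circ> (\<lambda>s. x + s)"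
    by (auto simp: p coord_dir_def fun_eq_iff)
  have "(((\<lambda>x'. f (x',y,t)) \<circ> (\<lambda>s. x + s)) has_vector_derivative (1 *\<^sub>R g (x,y,t))) (at 0)"
    by (rule vector_diff_chain_at) (auto intro!: derivative_eq_intros assms)
  then have "((\<lambda>s. f (p + s *\<^sub>R coord_dir 0)) has_vector_derivative g p) (at 0)"
    unfolding e by (simp add: p)
  then show "((\<lambda>s. f (p + s *\<^sub>R coord_dir 0)) has_vector_derivative g p)
          (at 0 within {s. p + s *\<^sub>R coord_dir 0 \<in> halfspace})"
    by (rule has_vector_derivative_at_within)
qed

lemma hp1:
  assumes "\<And>x y t. ((\<lambda>y. f (x,y,t)) has_vector_derivative g (x,y,t)) (at y)"
  shows "has_partial f 1 g"
  unfolding has_partial_def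
proof (intro ballI)
  fix p :: "real\<times>real\<times>real" assume "p \<in> halfspace"
  obtain x y t where p: "p = (x,y,t)" by (cases p) auto
  have e: "(\<lambda>s. f (p + s *\<^sub>R coord_dir 1)) = (\<lambda>y'. f (x,y',t)) \<circ> (\<lambda>s. y + s)"
    by (auto simp: p coord_dir_def fun_eq_iff)
  have "(((\<lambda>y'. f (x,y',t)) \<circ> (\<lambda>s. y + s)) has_vector_derivative (1 *\<^sub>R g (x,y,t))) (at 0)"
    by (rule vector_diff_chain_at) (auto intro!: derivative_eq_intros assms)
  then have "((\<lambda>s. f (p + s *\<^sub>R coord_dir 1)) has_vector_derivative g p) (at 0)"
    unfolding e by (simp add: p)
  then show "((\<lambda>s. f (p + s *\<^sub>R coord_dir 1)) has_vector_derivative g p)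
          (at 0 within {s. p + s *\<^sub>R coord_dir 1 \<in> halfspace})"
    by (rule has_vector_derivative_at_within)
qed

lemma hp2:
  assumes "\<And>x y t. ((\<lambda>t. f (x,y,t)) has_vector_derivative g (x,y,t)) (at t)"
  shows "has_partial f 2 g"
  unfolding has_partial_def
proof (intro ballI)
  fix p :: "real\<times>real\<times>real" assume "p \<in> halfspace"
  obtain x y t where p: "p = (x,y,t)" by (cases p) auto
  have e: "(\<lambda>s. f (p + s *\<^sub>R coord_dir 2)) = (\<lambda>t'. f (x,y,t')) \<circ> (\<lambda>s. t + s)"
    by (auto simp: p coord_dir_def fun_eq_iff)
  have "(((\<lambda>t'. f (x,y,t')) \<circ> (\<lambda>s. t + s)) has_vector_derivative (1 *\<^sub>R g (x,y,t))) (at 0)"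
    by (rule vector_diff_chain_at) (auto intro!: derivative_eq_intros assms)
  then have "((\<lambda>s. f (p + s *\<^sub>R coord_dir 2)) has_vector_derivative g p) (at 0)"
    unfolding e by (simp add: p)
  then show "((\<lambda>s. f (p + s *\<^sub>R coord_dir 2)) has_vector_derivative g p)
          (at 0 within {s. p + s *\<^sub>R coord_dir 2 \<in> halfspace})"
    by (rule has_vector_derivative_at_within)
qed

definition BC :: "(real\<times>real\<times>real \<Rightarrow> complex) \<Rightarrow> bool" where
  "BC f \<longleftrightarrow> continuous_on UNIV f \<and> (\<exists>K. \<forall>p. norm (f p) \<le> K)"

lemma BC_add: "BC f \<Longrightarrow> BC g \<Longrightarrow> BC (\<lambda>p. f p + g p)"
  unfolding BC_def
proof (elim conjE exE, intro conjI)
  fix K1 K2 assume "continuous_on UNIV f" "continuous_on UNIV g" and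
    k: "\<forall>p. norm (f p) \<le> K1" "\<forall>p. norm (g p) \<le> K2"
  then show "continuous_on UNIV (\<lambda>p. f p + g p)" by (intro continuous_intros)
  show "\<exists>K. \<forall>p. norm (f p + g p) \<le> K"
    using k by (intro exI[of _ "K1 + K2"]) (meson add_mono norm_triangle_le)
qed

lemma BC_H: assumes "BC f" shows "bounded_continuous_on_H f"
proof -
  obtain K where c: "continuous_on UNIV f" and K: "\<And>p. norm (f p) \<le> K" using assms unfolding BC_def by blast
  have "bounded (f ` halfspace)" by (rule boundedI[of _ K]) (use K in auto)
  then show ?thesis unfolding bounded_continuous_on_H_def using continuous_on_subset[OF c] by blast
qed

lemma W_BC:
  assumes "continuous_on UNIV c" "\<And>s. 0 < s \<Longrightarrow> \<bar>c s\<bar> \<le> 3 * (1 + s)^4"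
    "continuous_on UNIV \<psi>" "\<And>r. \<bar>\<psi> r\<bar> \<le> 30" "\<And>r. 1 \<le> \<bar>r\<bar> \<Longrightarrow> \<psi> r = 0"
    "\<And>k. continuous_on UNIV (\<lambda>p::real\<times>real\<times>real. S k (fst p) (fst (snd p)))"
    "\<And>k x y. 0 \<le> k \<Longrightarrow> norm (S k x y) \<le> 1 * (1 + of_int k)^2"
  shows "BC (Wf c \<psi> S)"
proof -
  have "continuous_on UNIV (Wf c \<psi> S)" by (rule W_cont) (use assms in auto)
  moreover have "norm (Wf c \<psi> S q) \<le> 2 * 3 * 30 * 1 * 3456" for q
    by (rule W_bound[where Kc=3 and Kp=30 and KS=1]) (use assms in auto)
  ultimately show ?thesis unfolding BC_def by blast
qed

definition k1 :: "real \<Rightarrow> real" where "k1 s = 1"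
definition k2 :: "real \<Rightarrow> real" where "k2 s = - (s^2)"
definition k3 :: "real \<Rightarrow> real" where "k3 s = s"
definition k4 :: "real \<Rightarrow> real" where "k4 s = s^4 - 2 * s^2"
definition k5 :: "real \<Rightarrow> real" where "k5 s = - (s^3)"
definition k6 :: "real \<Rightarrow> real" where "k6 s = s - s^3"
definition k7 :: "real \<Rightarrow> real" where "k7 s = s^2"

lemmas k_defs = k1_def k2_def k3_def k4_def k5_def k6_def k7_def

lemma k_cont: "continuous_on UNIV k1" "continuous_on UNIV k2" "continuous_on UNIV k3"
  "continuous_on UNIV k4" "continuous_on UNIV k5" "continuous_on UNIV k6" "continuous_on UNIV k7"
  unfolding k_defs[abs_def] by (intro continuous_intros)+

lemma pow_le_4: "0 < s \<Longrightarrow> n \<le> 4 \<Longrightarrow> (s::real)^n \<le> (1 + s)^4"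
proof -
  assume s: "0 < s" and n: "n \<le> 4"
  have "s^n \<le> (1 + s)^n" using s by (intro power_mono) auto
  also have "\<dots> \<le> (1 + s)^4" using s n by (intro power_increasing) auto
  finally show ?thesis .
qed

lemma k_bound:
  assumes s: "0 < s"
  shows "\<bar>k1 s\<bar> \<le> 3 * (1 + s)^4" "\<bar>k2 s\<bar> \<le> 3 * (1 + s)^4" "\<bar>k3 s\<bar> \<le> 3 * (1 + s)^4"
    "\<bar>k4 s\<bar> \<le> 3 * (1 + s)^4" "\<bar>k5 s\<bar> \<le> 3 * (1 + s)^4" "\<bar>k6 s\<bar> \<le> 3 * (1 + s)^4"
    "\<bar>k7 s\<bar> \<le> 3 * (1 + s)^4"
proof -
  have p0: "s^0 \<le> (1 + s)^4" and p1: "s^1 \<le> (1 + s)^4" and p2: "s^2 \<le> (1 + s)^4"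
    and p3: "s^3 \<le> (1 + s)^4" and p4: "s^4 \<le> (1 + s)^4"
    using pow_le_4[OF s, of 0] pow_le_4[OF s, of 1] pow_le_4[OF s, of 2] pow_le_4[OF s, of 3]
      pow_le_4[OF s, of 4] by auto
  have q: "0 \<le> s^2" "0 \<le> s^3" "0 \<le> s^4" "0 \<le> (1 + s)^4" using s by auto
  show "\<bar>k1 s\<bar> \<le> 3 * (1 + s)^4"
  proof -
    have h: "1 \<le> (1 + s)^4" using s by simp
    have "\<bar>k1 s\<bar> = 1" by (simp add: k1_def)
    then show ?thesis using h by linarith
  qed
  have "\<bar>k2 s\<bar> = s^2" by (simp add: k2_def)
  then show "\<bar>k2 s\<bar> \<le> 3 * (1 + s)^4" using p2 q by linarith
  have "\<bar>k3 s\<bar> = s^1" using s by (simp add: k3_def)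
  then show "\<bar>k3 s\<bar> \<le> 3 * (1 + s)^4" using p1 q by linarith
  have "\<bar>k4 s\<bar> \<le> s^4 + 2 * s^2" unfolding k4_def using q by linarith
  then show "\<bar>k4 s\<bar> \<le> 3 * (1 + s)^4" using p2 p4 q by linarith
  have "\<bar>k5 s\<bar> = s^3" using s by (simp add: k5_def)
  then show "\<bar>k5 s\<bar> \<le> 3 * (1 + s)^4" using p3 q by linarith
  have "\<bar>k6 s\<bar> \<le> s^1 + s^3" unfolding k6_def using q s by (simp add: abs_le_iff)
  then show "\<bar>k6 s\<bar> \<le> 3 * (1 + s)^4" using p1 p3 q by linarith
  have "\<bar>k7 s\<bar> = s^2" by (simp add: k7_def)
  then show "\<bar>k7 s\<bar> \<le> 3 * (1 + s)^4" using p2 q by linarith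
qed

lemma phi_b30: "\<bar>phi0 r\<bar> \<le> 30" "\<bar>phi1 r\<bar> \<le> 30" "\<bar>phi2 r\<bar> \<le> 30"
  using phi0_bound[of r] phi1_bound[of r] phi2_bound[of r] by linarith+

lemma phi_v: "1 \<le> \<bar>r\<bar> \<Longrightarrow> phi0 r = 0" "1 \<le> \<bar>r\<bar> \<Longrightarrow> phi1 r = 0" "1 \<le> \<bar>r\<bar> \<Longrightarrow> phi2 r = 0"
  using phi_vanish by auto

lemmas BC_rules = W_BC[OF _ k_bound(1)] W_BC[OF _ k_bound(2)] W_BC[OF _ k_bound(3)]
  W_BC[OF _ k_bound(4)] W_BC[OF _ k_bound(5)] W_BC[OF _ k_bound(6)] W_BC[OF _ k_bound(7)]

lemma all_BC:
  assumes "c \<in> {k1,k2,k3,k4,k5,k6,k7}" "\<psi> \<in> {phi0,phi1,phi2}" "S \<in> {E,Gx,Gy,Gxx,Gyy,Zf}"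
  shows "BC (Wf c \<psi> S)"
proof -
  have cc: "continuous_on UNIV c" "\<And>s. 0 < s \<Longrightarrow> \<bar>c s\<bar> \<le> 3 * (1 + s)^4"
    using assms(1) k_cont k_bound by auto
  have pp: "continuous_on UNIV \<psi>" "\<And>r. \<bar>\<psi> r\<bar> \<le> 30" "\<And>r. 1 \<le> \<bar>r\<bar> \<Longrightarrow> \<psi> r = 0"
    using assms(2) phi0_cont phi1_cont phi2_cont phi_b30 phi_v by auto
  have ss: "\<And>k. continuous_on UNIV (\<lambda>p::real\<times>real\<times>real. S k (fst p) (fst (snd p)))"
    "\<And>k x y. 0 \<le> k \<Longrightarrow> norm (S k x y) \<le> 1 * (1 + of_int k)^2"
    using assms(3) E_cont Es_cont Es_norm by auto
  show ?thesis by (rule W_BC[OF cc pp ss])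
qed



lemma Exx_Eyy: "Gxx k x y + Gyy k x y = - ((of_int k)^2 * E k x y)"
  by (simp add: Gxx_def Gyy_def)

lemma stage_basic:
  fixes t :: real
  assumes t: "0 \<le> t"
  shows "1 \<le> \<lfloor>exp t\<rfloor>" "of_int \<lfloor>exp t\<rfloor> \<le> exp t" "exp t < of_int \<lfloor>exp t\<rfloor> + 1"
proof -
  have "1 \<le> exp t" using t exp_ge_add_one_self[of t] by linarith
  then show "1 \<le> \<lfloor>exp t\<rfloor>" by linarith
qed linarith+

lemma phi_pair:
  assumes r: "0 \<le> r" "r < 1"
  shows "1/6 \<le> (phi0 r)^2 + (phi0 (r - 1))^2"
proof -
  have key: "1/6 \<le> ((1 - q^2)^3)^2" if q: "\<bar>q\<bar> \<le> 1/2" for q :: real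
  proof -
    have "q^2 \<le> (1/2)^2" using q by (metis abs_le_square_iff power2_abs abs_ge_zero abs_of_nonneg order_trans zero_le_divide_iff zero_le_one zero_le_numeral)
    moreover have "(1/2::real)^2 = 1/4" by (simp add: power2_eq_square)
    ultimately have h: "3/4 \<le> 1 - q^2" by linarith
    have "(3/4)^3 \<le> (1 - q^2)^3" using h by (intro power_mono) auto
    then have "((3/4)^3)^2 \<le> ((1 - q^2)^3)^2" using h by (intro power_mono) auto
    moreover have "(1/6::real) \<le> ((3/4)^3)^2" by (simp add: power_divide)
    ultimately show ?thesis by linarith
  qed
  show ?thesis
  proof (cases "r \<le> 1/2")
    case True
    then have "phi0 r = (1 - r^2)^3" using r by (simp add: phi0_def)
    moreover have "1/6 \<le> ((1 - r^2)^3)^2" using key[of r] True r by simp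
    ultimately show ?thesis by (smt (verit) zero_le_power2)
  next
    case False
    then have "phi0 (r - 1) = (1 - (r-1)^2)^3" using r by (simp add: phi0_def)
    moreover have "1/6 \<le> ((1 - (r-1)^2)^3)^2" using key[of "r - 1"] False r by simp
    ultimately show ?thesis by (smt (verit) zero_le_power2)
  qed
qed



lemma dt1: "((\<lambda>\<tau>. Wf k1 phi0 S (x,y,\<tau>)) has_vector_derivative (Wf k2 phi0 S (x,y,t) + Wf k3 phi1 S (x,y,t))) (at t)"
proof -
  have e1: "(\<lambda>s. - (s^2 * k1 s) + s * 0) = k2" "(\<lambda>s. s * k1 s) = k3" by (auto simp: k_defs fun_eq_iff)
  have "(k1 has_real_derivative 0) (at s)" for s unfolding k1_def[abs_def] by simp
  from W_deriv_t[OF this phi0_deriv phi_v(1) phi_v(2)] show ?thesis by (simp only: e1)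
qed

lemma dt2: "((\<lambda>\<tau>. Wf k2 phi0 S (x,y,\<tau>)) has_vector_derivative (Wf k4 phi0 S (x,y,t) + Wf k5 phi1 S (x,y,t))) (at t)"
proof -
  have e1: "(\<lambda>s. - (s^2 * k2 s) + s * (- (2 * s))) = k4" "(\<lambda>s. s * k2 s) = k5"
    by (auto simp: k_defs fun_eq_iff power2_eq_square power3_eq_cube power4_eq_xxxx algebra_simps)
  have "(k2 has_real_derivative (- (2 * s))) (at s)" for s unfolding k2_def[abs_def]
    by (auto intro!: derivative_eq_intros)
  from W_deriv_t[OF this phi0_deriv phi_v(1) phi_v(2)] show ?thesis by (simp only: e1)
qed

lemma dt3: "((\<lambda>\<tau>. Wf k3 phi1 S (x,y,\<tau>)) has_vector_derivative (Wf k6 phi1 S (x,y,t) + Wf k7 phi2 S (x,y,t))) (at t)"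
proof -
  have e1: "(\<lambda>s. - (s^2 * k3 s) + s * 1) = k6" "(\<lambda>s. s * k3 s) = k7"
    by (auto simp: k_defs fun_eq_iff power2_eq_square power3_eq_cube algebra_simps)
  have "(k3 has_real_derivative 1) (at s)" for s unfolding k3_def[abs_def]
    by (auto intro!: derivative_eq_intros)
  from W_deriv_t[OF this phi1_deriv phi_v(2) phi_v(3)] show ?thesis by (simp only: e1)
qed

definition uu :: "real\<times>real\<times>real \<Rightarrow> complex" where "uu = Wf k1 phi0 E"
definition ut :: "(int \<Rightarrow> real \<Rightarrow> real \<Rightarrow> complex) \<Rightarrow> real\<times>real\<times>real \<Rightarrow> complex" where
  "ut S = (\<lambda>p. Wf k2 phi0 S p + Wf k3 phi1 S p)"
definition DD1 :: "nat \<Rightarrow> real\<times>real\<times>real \<Rightarrow> complex" where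
  "DD1 i = (if i = 0 then Wf k1 phi0 Gx else if i = 1 then Wf k1 phi0 Gy else ut E)"
definition DD2 :: "nat \<Rightarrow> nat \<Rightarrow> real\<times>real\<times>real \<Rightarrow> complex" where
  "DD2 i j = (if i = 2 \<and> j = 2 then (\<lambda>p. (Wf k4 phi0 E p + Wf k5 phi1 E p) + (Wf k6 phi1 E p + Wf k7 phi2 E p))
     else if j = 2 then ut (if i = 0 then Gx else Gy)
     else if i = 2 then ut (if j = 0 then Gx else Gy)
     else Wf k1 phi0 (if i = 0 \<and> j = 0 then Gxx else if i = 1 \<and> j = 1 then Gyy else Zf))"

lemma ut_dt: "((\<lambda>\<tau>. ut S (x,y,\<tau>)) has_vector_derivative
    ((Wf k4 phi0 S (x,y,t) + Wf k5 phi1 S (x,y,t)) + (Wf k6 phi1 S (x,y,t) + Wf k7 phi2 S (x,y,t)))) (at t)"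
  unfolding ut_def by (intro has_vector_derivative_add dt2 dt3)

lemma ut_dx:
  assumes "\<And>k. ((\<lambda>x. S k x y) has_vector_derivative Sx k x y) (at x)"
  shows "((\<lambda>x. ut S (x,y,t)) has_vector_derivative ut Sx (x,y,t)) (at x)"
  unfolding ut_def by (intro has_vector_derivative_add W_deriv_x assms)

lemma ut_dy:
  assumes "\<And>k. ((\<lambda>y. S k x y) has_vector_derivative Sy k x y) (at y)"
  shows "((\<lambda>y. ut S (x,y,t)) has_vector_derivative ut Sy (x,y,t)) (at y)"
  unfolding ut_def by (intro has_vector_derivative_add W_deriv_y assms)

lemma all3: "(\<forall>i<3. P i) \<longleftrightarrow> P 0 \<and> P 1 \<and> P (2::nat)"
proof -
  have "i < 3 \<longleftrightarrow> i = 0 \<or> i = 1 \<or> i = 2" for i :: nat by auto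
  then show ?thesis by auto
qed

lemma BCs: "BC (Wf k1 phi0 E)" "BC (Wf k1 phi0 Gx)" "BC (Wf k1 phi0 Gy)" "BC (Wf k1 phi0 Gxx)"
  "BC (Wf k1 phi0 Gyy)" "BC (Wf k1 phi0 Zf)"
  "BC (ut E)" "BC (ut Gx)" "BC (ut Gy)"
  "BC (\<lambda>p. (Wf k4 phi0 E p + Wf k5 phi1 E p) + (Wf k6 phi1 E p + Wf k7 phi2 E p))"
  unfolding ut_def by (intro BC_add all_BC; simp)+

lemma DD1_eqs: "DD1 0 = Wf k1 phi0 Gx" "DD1 1 = Wf k1 phi0 Gy" "DD1 2 = ut E"
  by (simp_all add: DD1_def)

lemma DD2_eqs: "DD2 0 0 = Wf k1 phi0 Gxx" "DD2 0 1 = Wf k1 phi0 Zf" "DD2 0 2 = ut Gx"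
  "DD2 1 0 = Wf k1 phi0 Zf" "DD2 1 1 = Wf k1 phi0 Gyy" "DD2 1 2 = ut Gy"
  "DD2 2 0 = ut Gx" "DD2 2 1 = ut Gy"
  "DD2 2 2 = (\<lambda>p. (Wf k4 phi0 E p + Wf k5 phi1 E p) + (Wf k6 phi1 E p + Wf k7 phi2 E p))"
  by (simp_all add: DD2_def)

lemma C2: "uniformly_C2_with uu DD1 DD2"
  unfolding uniformly_C2_with_def all3 DD1_eqs DD2_eqs uu_def
proof (intro conjI)
  show "has_partial (Wf k1 phi0 E) 0 (Wf k1 phi0 Gx)" by (rule hp0, rule W_deriv_x, rule E_dx)
  show "has_partial (Wf k1 phi0 E) 1 (Wf k1 phi0 Gy)" by (rule hp1, rule W_deriv_y, rule E_dy)
  show "has_partial (Wf k1 phi0 E) 2 (ut E)" by (rule hp2, simp only: ut_def, rule dt1)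
  show "has_partial (Wf k1 phi0 Gx) 0 (Wf k1 phi0 Gxx)" by (rule hp0, rule W_deriv_x, rule Ex_dx)
  show "has_partial (Wf k1 phi0 Gx) 1 (Wf k1 phi0 Zf)" by (rule hp1, rule W_deriv_y, rule Ex_dy)
  show "has_partial (Wf k1 phi0 Gx) 2 (ut Gx)" by (rule hp2, simp only: ut_def, rule dt1)
  show "has_partial (Wf k1 phi0 Gy) 0 (Wf k1 phi0 Zf)" by (rule hp0, rule W_deriv_x, rule Ey_dx)
  show "has_partial (Wf k1 phi0 Gy) 1 (Wf k1 phi0 Gyy)" by (rule hp1, rule W_deriv_y, rule Ey_dy)
  show "has_partial (Wf k1 phi0 Gy) 2 (ut Gy)" by (rule hp2, simp only: ut_def, rule dt1)
  show "has_partial (ut E) 0 (ut Gx)" by (rule hp0, rule ut_dx, rule E_dx)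
  show "has_partial (ut E) 1 (ut Gy)" by (rule hp1, rule ut_dy, rule E_dy)
  show "has_partial (ut E) 2 (\<lambda>p. (Wf k4 phi0 E p + Wf k5 phi1 E p) + (Wf k6 phi1 E p + Wf k7 phi2 E p))"
    by (rule hp2, rule ut_dt)
qed (intro BC_H BCs)+



definition FF :: "real\<times>real\<times>real \<Rightarrow> complex" where
  "FF p = DD1 2 p - DD2 0 0 p - DD2 1 1 p"
definition den :: "real\<times>real\<times>real \<Rightarrow> real" where
  "den p = (cmod (DD1 0 p))^2 + (cmod (DD1 1 p))^2"
definition BB1 :: "real\<times>real\<times>real \<Rightarrow> complex" where
  "BB1 p = FF p * cnj (DD1 0 p) / of_real (den p)"
definition BB2 :: "real\<times>real\<times>real \<Rightarrow> complex" where
  "BB2 p = FF p * cnj (DD1 1 p) / of_real (den p)"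

lemma nE: "norm (r *\<^sub>R (\<i> * of_int k * E k x y)) = \<bar>r\<bar> * \<bar>of_int k\<bar>"
  by (simp add: norm_mult E_norm)

lemma cm1: "cmod (complex_of_int m + 1) = \<bar>real_of_int m + 1\<bar>"
proof -
  have "complex_of_int m + 1 = of_real (real_of_int m + 1)" by simp
  then show ?thesis by (simp only: norm_of_real)
qed

lemma den_formula:
  fixes x y t :: real
  defines "s \<equiv> exp t"
  defines "m \<equiv> \<lfloor>s\<rfloor>"
  shows "den (x,y,t) = (Aa t)^2 * ((phi0 (s - m))^2 * (of_int m)^2 + (phi0 (s - m - 1))^2 * (of_int m + 1)^2)"
proof -
  have A: "\<bar>Aa t\<bar> = Aa t" using Aa_pos[of t] by simp
  have u0: "DD1 0 (x,y,t) = Aa t *\<^sub>R (phi0 (s - m) *\<^sub>R Gx m x y + phi0 (s - m - 1) *\<^sub>R Gx (m+1) x y)"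
    unfolding DD1_eqs by (simp add: Wf_app Vf_def k1_def s_def m_def)
  have u1: "DD1 1 (x,y,t) = Aa t *\<^sub>R (phi0 (s - m) *\<^sub>R Gy m x y + phi0 (s - m - 1) *\<^sub>R Gy (m+1) x y)"
    unfolding DD1_eqs by (simp add: Wf_app Vf_def k1_def s_def m_def)
  show ?thesis
  proof (cases "even m")
    case True
    have "cmod (DD1 0 (x,y,t)) = Aa t * (\<bar>phi0 (s - m)\<bar> * \<bar>of_int m\<bar>)"
      using True unfolding u0 by (simp add: Gx_def nE A norm_scaleR norm_mult E_norm del: scaleR_scaleR)
    moreover have "cmod (DD1 1 (x,y,t)) = Aa t * (\<bar>phi0 (s - m - 1)\<bar> * \<bar>of_int m + 1\<bar>)"
      using True unfolding u1 by (simp add: Gy_def A norm_mult E_norm cm1 del: scaleR_scaleR)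
    ultimately show ?thesis by (simp add: den_def power_mult_distrib algebra_simps)
  next
    case False
    have "cmod (DD1 1 (x,y,t)) = Aa t * (\<bar>phi0 (s - m)\<bar> * \<bar>of_int m\<bar>)"
      using False unfolding u1 by (simp add: Gy_def nE A norm_scaleR norm_mult E_norm del: scaleR_scaleR)
    moreover have "cmod (DD1 0 (x,y,t)) = Aa t * (\<bar>phi0 (s - m - 1)\<bar> * \<bar>of_int m + 1\<bar>)"
      using False unfolding u0 by (simp add: Gx_def A norm_mult E_norm cm1 del: scaleR_scaleR)
    ultimately show ?thesis by (simp add: den_def power_mult_distrib algebra_simps)
  qed
qed



lemma FF_formula:
  fixes x y t :: real
  defines "s \<equiv> exp t"
  defines "m \<equiv> \<lfloor>s\<rfloor>"
  shows "FF (x,y,t) = Aa t *\<^sub>R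
     ((phi0 (s - m) * ((of_int m)^2 - s^2) + s * phi1 (s - m)) *\<^sub>R E m x y
    + (phi0 (s - m - 1) * ((of_int m + 1)^2 - s^2) + s * phi1 (s - m - 1)) *\<^sub>R E (m+1) x y)"
proof -
  have "FF (x,y,t) = ut E (x,y,t) - Wf k1 phi0 Gxx (x,y,t) - Wf k1 phi0 Gyy (x,y,t)"
    unfolding FF_def DD1_eqs DD2_eqs by simp
  also have "\<dots> = Aa t *\<^sub>R
     ((- (s^2) * phi0 (s - m)) *\<^sub>R E m x y + (- (s^2) * phi0 (s - m - 1)) *\<^sub>R E (m+1) x y
      + (s * phi1 (s - m)) *\<^sub>R E m x y + (s * phi1 (s - m - 1)) *\<^sub>R E (m+1) x y
      - phi0 (s - m) *\<^sub>R (Gxx m x y + Gyy m x y) - phi0 (s - m - 1) *\<^sub>R (Gxx (m+1) x y + Gyy (m+1) x y))"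
    unfolding ut_def Wf_app Vf_def k_defs s_def m_def
    by (simp add: algebra_simps)
  also have "\<dots> = Aa t *\<^sub>R
     ((phi0 (s - m) * ((of_int m)^2 - s^2) + s * phi1 (s - m)) *\<^sub>R E m x y
    + (phi0 (s - m - 1) * ((of_int m + 1)^2 - s^2) + s * phi1 (s - m - 1)) *\<^sub>R E (m+1) x y)"
    unfolding Exx_Eyy by (simp add: algebra_simps scaleR_conv_of_real)
  finally show ?thesis .
qed

lemma FF_bound:
  fixes x y t :: real
  assumes t: "0 \<le> t"
  shows "norm (FF (x,y,t)) \<le> 30 * Aa t * of_int \<lfloor>exp t\<rfloor>"
proof -
  define s where "s = exp t"
  define m where "m = \<lfloor>s\<rfloor>"
  have m1: "1 \<le> m" and ms: "of_int m \<le> s" and sm: "s < of_int m + 1"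
    using stage_basic[OF t] unfolding s_def m_def by auto
  have m0: "0 \<le> real_of_int m" using m1 by simp
  have d1: "\<bar>(of_int m)^2 - s^2\<bar> \<le> 2 * of_int m + 1"
  proof -
    have "s^2 - (of_int m)^2 = (s - of_int m) * (s + of_int m)" by (simp add: power2_eq_square algebra_simps)
    also have "\<dots> \<le> 1 * (2 * of_int m + 1)" using ms sm m0 by (intro mult_mono) auto
    finally have "s^2 - (of_int m)^2 \<le> 2 * of_int m + 1" by simp
    moreover have "(of_int m)^2 \<le> s^2" using ms m0 by (intro power_mono) auto
    ultimately show ?thesis by linarith
  qed
  have d2: "\<bar>(of_int m + 1)^2 - s^2\<bar> \<le> 2 * of_int m + 1"
  proof -
    have "(of_int m + 1)^2 - s^2 \<le> (of_int m + 1)^2 - (of_int m)^2"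
      using ms m0 power_mono[of "of_int m" s 2] by auto
    also have "\<dots> = 2 * of_int m + 1" by (simp add: power2_eq_square algebra_simps)
    finally have "(of_int m + 1)^2 - s^2 \<le> 2 * of_int m + 1" .
    moreover have "s^2 \<le> (of_int m + 1)^2" using sm ms m0 by (intro power_mono) auto
    ultimately show ?thesis by linarith
  qed
  have trm: "\<bar>phi0 r * d + s * phi1 r\<bar> \<le> 8 * of_int m + 7" if "\<bar>d\<bar> \<le> 2 * of_int m + 1" for r d
  proof -
    have "\<bar>phi0 r * d\<bar> \<le> 1 * (2 * of_int m + 1)"
      unfolding abs_mult using phi0_bound[of r] that by (intro mult_mono) auto
    moreover have "\<bar>s * phi1 r\<bar> \<le> (of_int m + 1) * 6"
      unfolding abs_mult using phi1_bound[of r] sm ms m0 by (intro mult_mono) auto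
    ultimately show ?thesis by (smt (verit))
  qed
  define c1 where "c1 = phi0 (s - m) * ((of_int m)^2 - s^2) + s * phi1 (s - m)"
  define c2 where "c2 = phi0 (s - m - 1) * ((of_int m + 1)^2 - s^2) + s * phi1 (s - m - 1)"
  have "norm (FF (x,y,t)) = Aa t * norm (c1 *\<^sub>R E m x y + c2 *\<^sub>R E (m+1) x y)"
    unfolding FF_formula s_def[symmetric] m_def[symmetric] c1_def c2_def
    using Aa_pos[of t] by simp
  also have "\<dots> \<le> Aa t * (\<bar>c1\<bar> + \<bar>c2\<bar>)"
    using Aa_pos[of t] norm_triangle_ineq[of "c1 *\<^sub>R E m x y" "c2 *\<^sub>R E (m+1) x y"]
    by (intro mult_left_mono) (auto simp: E_norm)
  also have "\<dots> \<le> Aa t * ((8 * of_int m + 7) + (8 * of_int m + 7))"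
    using Aa_pos[of t] trm[OF d1] trm[OF d2] unfolding c1_def c2_def
    by (intro mult_left_mono add_mono) auto
  also have "\<dots> \<le> Aa t * (30 * of_int m)" using m1 Aa_pos[of t] by (intro mult_left_mono) auto
  finally show ?thesis by (simp add: m_def s_def)
qed

lemma den_lower:
  fixes x y t :: real
  assumes t: "0 \<le> t"
  shows "(Aa t * of_int \<lfloor>exp t\<rfloor>)^2 / 6 \<le> den (x,y,t)"
proof -
  define s where "s = exp t"
  define m where "m = \<lfloor>s\<rfloor>"
  have m1: "1 \<le> m" and ms: "of_int m \<le> s" and sm: "s < of_int m + 1"
    using stage_basic[OF t] unfolding s_def m_def by auto
  have pp: "1/6 \<le> (phi0 (s - m))^2 + (phi0 (s - m - 1))^2"
    using phi_pair[of "s - m"] ms sm by (simp add: algebra_simps)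
  have mm: "(of_int m)^2 \<le> (of_int m + 1 :: real)^2" using m1 by (intro power_mono) auto
  have "(of_int m)^2 * (1/6) \<le> (of_int m)^2 * ((phi0 (s - m))^2 + (phi0 (s - m - 1))^2)"
    by (rule mult_left_mono[OF pp]) simp
  then have "(of_int m)^2 / 6 \<le> (of_int m)^2 * ((phi0 (s - m))^2 + (phi0 (s - m - 1))^2)"
    by simp
  also have "\<dots> \<le> (phi0 (s - m))^2 * (of_int m)^2 + (phi0 (s - m - 1))^2 * (of_int m + 1)^2"
    using mult_left_mono[OF mm, of "(phi0 (s - m - 1))^2"] by (simp add: algebra_simps)
  finally have "(Aa t)^2 * ((of_int m)^2 / 6) \<le> (Aa t)^2 * ((phi0 (s - m))^2 * (of_int m)^2 + (phi0 (s - m - 1))^2 * (of_int m + 1)^2)"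
    by (intro mult_left_mono) auto
  then show ?thesis
    unfolding den_formula s_def[symmetric] m_def[symmetric] by (simp add: power_mult_distrib)
qed



lemma BC_D: "BC (DD1 0)" "BC (DD1 1)" "BC (DD1 2)" "BC (DD2 0 0)" "BC (DD2 1 1)" "BC uu"
  unfolding DD1_eqs DD2_eqs uu_def by (rule BCs)+

lemma cont_D: "continuous_on S (DD1 0)" "continuous_on S (DD1 1)" "continuous_on S (DD1 2)"
  "continuous_on S (DD2 0 0)" "continuous_on S (DD2 1 1)"
  using BC_D unfolding BC_def by (meson continuous_on_subset subset_UNIV)+

lemma den_pos:
  fixes x y t :: real
  assumes "0 \<le> t" shows "0 < den (x,y,t)"
proof -
  have "1 \<le> \<lfloor>exp t\<rfloor>" using stage_basic[OF assms] by simp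
  then have "0 < real_of_int \<lfloor>exp t\<rfloor>" by simp
  then have "0 < Aa t * real_of_int \<lfloor>exp t\<rfloor>" using Aa_pos[of t] by simp
  then have "0 < (Aa t * of_int \<lfloor>exp t\<rfloor>)^2 / 6" by (intro divide_pos_pos zero_less_power) auto
  then show ?thesis using den_lower[OF assms, of x y] by linarith
qed

lemma den_pos_H: "p \<in> halfspace \<Longrightarrow> 0 < den p"
  by (cases p) (auto simp: halfspace_def intro: den_pos)

lemma B_bound_gen:
  fixes x y t :: real and w :: complex
  assumes t: "0 \<le> t" and w: "(cmod w)^2 \<le> den (x,y,t)"
  shows "norm (FF (x,y,t) * cnj w / of_real (den (x,y,t))) \<le> 74"
proof -
  define D where "D = den (x,y,t)"
  define nF where "nF = norm (FF (x,y,t))"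
  define m where "m = real_of_int \<lfloor>exp t\<rfloor>"
  have D: "0 < D" unfolding D_def by (rule den_pos[OF t])
  have nF0: "0 \<le> nF" unfolding nF_def by simp
  have F: "nF \<le> 30 * (Aa t * m)" unfolding nF_def m_def using FF_bound[OF t] by (simp add: mult.assoc)
  have Dl: "(Aa t * m)^2 \<le> 6 * D" unfolding D_def m_def using den_lower[OF t, of x y] by simp
  have am0: "0 \<le> Aa t * m" unfolding m_def using stage_basic[OF t] Aa_pos[of t] by simp
  have F2: "nF^2 \<le> 900 * (Aa t * m)^2"
    using power_mono[OF F nF0, of 2] by (simp add: power_mult_distrib)
  have "(nF * cmod w)^2 = nF^2 * (cmod w)^2" by (simp add: power_mult_distrib)
  also have "\<dots> \<le> (900 * (6 * D)) * D"
  proof -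
    have "900 * (Aa t * m)^2 \<le> 900 * (6 * D)" using Dl by simp
    then have a: "nF^2 \<le> 900 * (6 * D)" using F2 by (rule order_trans[rotated])
    have b: "0 \<le> 900 * (6 * D)" using D by simp
    have c: "0 \<le> (cmod w)^2" by simp
    show ?thesis by (rule mult_mono[OF a w[folded D_def] b c])
  qed
  also have "\<dots> \<le> (74 * D)^2"
  proof -
    have "0 \<le> D * D" using D by simp
    moreover have "900 * (6 * D) * D = 5400 * (D * D)" by simp
    moreover have "(74 * D)^2 = 5476 * (D * D)" by (simp add: power2_eq_square)
    ultimately show ?thesis by linarith
  qed
  finally have sq: "(nF * cmod w)^2 \<le> (74 * D)^2" .
  have "nF * cmod w \<le> 74 * D" by (rule power2_le_imp_le[OF sq]) (use D in simp)
  then have "nF * cmod w / D \<le> 74" using D by (simp add: divide_le_eq)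
  then show ?thesis using D unfolding nF_def D_def by (simp add: norm_mult norm_divide)
qed

lemma B1_bounded: assumes "p \<in> halfspace" shows "norm (BB1 p) \<le> 74"
proof -
  obtain x y t where p: "p = (x,y,t)" by (cases p) auto
  have t: "0 \<le> t" using assms by (simp add: p halfspace_def)
  have w: "(cmod (DD1 0 (x,y,t)))^2 \<le> den (x,y,t)" unfolding den_def by simp
  show ?thesis unfolding p BB1_def by (rule B_bound_gen[OF t w])
qed
lemma B2_bounded: assumes "p \<in> halfspace" shows "norm (BB2 p) \<le> 74"
proof -
  obtain x y t where p: "p = (x,y,t)" by (cases p) auto
  have t: "0 \<le> t" using assms by (simp add: p halfspace_def)
  have w: "(cmod (DD1 1 (x,y,t)))^2 \<le> den (x,y,t)" unfolding den_def by simp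
  show ?thesis unfolding p BB2_def by (rule B_bound_gen[OF t w])
qed

lemma B_cont: "continuous_on halfspace BB1" "continuous_on halfspace BB2"
proof -
  have Fc: "continuous_on halfspace FF" unfolding FF_def[abs_def]
    by (intro continuous_intros cont_D)
  have dc: "continuous_on halfspace (\<lambda>p. complex_of_real (den p))" unfolding den_def[abs_def]
    by (intro continuous_intros cont_D)
  have nz: "\<forall>p\<in>halfspace. complex_of_real (den p) \<noteq> 0" using den_pos_H by force
  show "continuous_on halfspace BB1" unfolding BB1_def[abs_def]
    by (intro continuous_on_divide continuous_intros Fc dc nz cont_D)
  show "continuous_on halfspace BB2" unfolding BB2_def[abs_def]
    by (intro continuous_on_divide continuous_intros Fc dc nz cont_D)
qed

lemma B_BCH: "bounded_continuous_on_H BB1" "bounded_continuous_on_H BB2"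
  unfolding bounded_continuous_on_H_def
  using B_cont B1_bounded B2_bounded by (auto intro!: boundedI)

lemma per_W: "S \<in> {E,Gx,Gy,Gxx,Gyy,Zf} \<Longrightarrow> torus_periodic (Wf c \<psi> S)"
  by (auto intro!: W_per simp: E_per Es_per)

lemma per_D: "torus_periodic (DD1 0)" "torus_periodic (DD1 1)" "torus_periodic (DD1 2)"
  "torus_periodic (DD2 0 0)" "torus_periodic (DD2 1 1)" "torus_periodic uu"
  unfolding DD1_eqs DD2_eqs uu_def ut_def
  using per_W[of E] per_W[of Gx] per_W[of Gy] per_W[of Gxx] per_W[of Gyy]
  by (auto simp: torus_periodic_def)

lemma per_B: "torus_periodic BB1" "torus_periodic BB2"
  using per_D unfolding torus_periodic_def BB1_def BB2_def FF_def den_def by simp_all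

lemma equation:
  assumes "p \<in> halfspace"
  shows "DD1 2 p = DD2 0 0 p + DD2 1 1 p + BB1 p * DD1 0 p + BB2 p * DD1 1 p"
proof -
  have D: "complex_of_real (den p) \<noteq> 0" using den_pos_H[OF assms] by simp
  have e: "complex_of_real (den p) = DD1 0 p * cnj (DD1 0 p) + DD1 1 p * cnj (DD1 1 p)"
    unfolding den_def by (simp add: complex_norm_square[symmetric])
  have "BB1 p * DD1 0 p + BB2 p * DD1 1 p = FF p * (DD1 0 p * cnj (DD1 0 p) + DD1 1 p * cnj (DD1 1 p)) / complex_of_real (den p)"
    unfolding BB1_def BB2_def using D by (simp add: field_simps)
  also have "\<dots> = FF p * complex_of_real (den p) / complex_of_real (den p)" by (simp only: e)
  also have "\<dots> = FF p" using D by simp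
  finally have "BB1 p * DD1 0 p + BB2 p * DD1 1 p = DD1 2 p - DD2 0 0 p - DD2 1 1 p" unfolding FF_def .
  then show ?thesis by (simp only: algebra_simps)
qed

lemma uu_bound: "norm (uu (x,y,t)) \<le> 2 * Aa t"
proof -
  have "norm (uu (x,y,t)) = Aa t * norm (Vf phi0 E (exp t) x y)"
    unfolding uu_def Wf_app k1_def using Aa_pos[of t] by simp
  also have "norm (Vf phi0 E (exp t) x y) \<le> 1 + 1"
    unfolding Vf_def
    by (rule order_trans[OF norm_triangle_ineq], intro add_mono)
       (auto simp: E_norm phi0_bound)
  then have "Aa t * norm (Vf phi0 E (exp t) x y) \<le> Aa t * 2"
    using Aa_pos[of t] by (intro mult_left_mono) auto
  finally show ?thesis by simp
qed

lemma decay: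
  fixes T t :: real
  assumes T: "2 \<le> T" and t: "T \<le> t"
  shows "2 * Aa t \<le> exp (- 1 * exp (1 * T))"
proof -
  define Y where "Y = exp T"
  have e1: "2 \<le> exp (1::real)" using exp_ge_add_one_self[of 1] by simp
  have "exp (2::real) = exp 1 * exp 1" by (simp add: exp_add[symmetric])
  also have "\<dots> \<ge> 2 * 2" using e1 by (intro mult_mono) auto
  finally have "4 \<le> exp (2::real)" by simp
  moreover have "exp 2 \<le> Y" unfolding Y_def using T by simp
  ultimately have Y4: "4 \<le> Y" by simp
  have "Y \<le> exp t" unfolding Y_def using t by simp
  then have "Y^2 \<le> (exp t)^2" using Y4 by (intro power_mono) auto
  moreover have "4 * Y \<le> Y^2" using Y4 by (simp add: power2_eq_square)
  ultimately have big: "4 * Y \<le> (exp t)^2" by simp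
  have l2: "ln 2 \<le> (1::real)" using ln_2_less_1 by simp
  have "2 * Aa t = exp (ln 2 + (1 - (exp t)^2) / 2)"
    by (simp add: Aa_def exp_add)
  also have "\<dots> \<le> exp (- Y)"
  proof (subst exp_le_cancel_iff)
    have "(1 - (exp t)^2) / 2 = 1/2 - (exp t)^2 / 2" by (simp add: diff_divide_distrib)
    then show "ln 2 + (1 - (exp t)^2) / 2 \<le> - Y" using big l2 Y4 by linarith
  qed
  finally show ?thesis by (simp add: Y_def)
qed



lemma uu_000: "uu (0,0,0) = 1"
proof -
  have "phi0 0 = 1" "phi0 (-1) = 0" by (simp_all add: phi0_def)
  then show ?thesis by (simp add: uu_def Wf_app Vf_def k1_def Aa_def E_def)
qed

theorem theorem1p3:
  shows "\<exists>(B1 :: real \<times> real \<times> real \<Rightarrow> complex) (B2 :: real \<times> real \<times> real \<Rightarrow> complex)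
            (u :: real \<times> real \<times> real \<Rightarrow> complex) D1 D2.
     torus_periodic B1 \<and> torus_periodic B2 \<and> torus_periodic u \<and>
     bounded_continuous_on_H B1 \<and> bounded_continuous_on_H B2 \<and>
     uniformly_C2_with u D1 D2 \<and>
     (\<exists>p \<in> halfspace. u p \<noteq> 0) \<and>
     (\<forall>p \<in> halfspace. D1 2 p = D2 0 0 p + D2 1 1 p + B1 p * D1 0 p + B2 p * D1 1 p) \<and>
     (\<exists>c > 0. \<exists>T0 \<ge> 0. \<forall>T \<ge> T0. \<forall>x y t. t \<ge> T \<longrightarrow>
         cmod (u (x, y, t)) \<le> exp (- c * exp (c * T)))"
proof (rule exI[of _ BB1], rule exI[of _ BB2], rule exI[of _ uu], rule exI[of _ DD1], rule exI[of _ DD2], intro conjI)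
  show "torus_periodic BB1" "torus_periodic BB2" by (rule per_B)+
  show "torus_periodic uu" by (rule per_D)
  show "bounded_continuous_on_H BB1" "bounded_continuous_on_H BB2" by (rule B_BCH)+
  show "uniformly_C2_with uu DD1 DD2" by (rule C2)
  show "\<exists>p\<in>halfspace. uu p \<noteq> 0"
    by (rule bexI[of _ "(0,0,0)"]) (simp_all add: uu_000 halfspace_def)
  show "\<forall>p\<in>halfspace. DD1 2 p = DD2 0 0 p + DD2 1 1 p + BB1 p * DD1 0 p + BB2 p * DD1 1 p"
    using equation by blast
  show "\<exists>c>0. \<exists>T0\<ge>0. \<forall>T\<ge>T0. \<forall>x y t. T \<le> t \<longrightarrow> cmod (uu (x, y, t)) \<le> exp (- c * exp (c * T))"
  proof (rule exI[of _ 1], rule conjI, simp, rule exI[of _ 2], rule conjI, simp, intro allI impI)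
    fix T x y t :: real assume "2 \<le> T" "T \<le> t"
    then show "cmod (uu (x, y, t)) \<le> exp (- 1 * exp (1 * T))"
      using uu_bound[of x y t] decay[of T t] by linarith
  qed
qed

end
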